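(* Let $(P,\mathit{dist})$ be a finite metric space of doubling dimension $d$, let $\delta$ be the closest-pair distance of $P$, let $S\subseteq P$ with $n=|S|\ge 2$, and let $\delta_0$ be the output of Algorithm $\mathrm{ClosestPair}(S,n,d)$ (for any outcome of its random choices). Then (1) $\delta_0\ge\delta$, and (2) if $\delta(S)=\delta$, then $\delta_0=\delta$.
   Context: For $X\subseteq P$, $p\in P$ and reals $R'\ge R\ge 0$: $\mathit{ball}_X(p,R)=\{x\in X:\mathit{dist}(p,x)\le R\}$ and $\mathit{annulus}_X(p,R,R')=\{x\in X: R<\mathit{dist}(p,x)\le R'\}$. For $X\subseteq P$, $\delta(X)=\infty$ if $|X|\le1$ and $\delta(X)=\min\{\mathit{dist}(x,y):x,y\in X,x\ne y\}$ otherwise; $\delta=\delta(P)$. The doubling dimension of $(P,\mathit{dist})$ is $\log_2\lambda$, where $\lambda$ is the smallest integer such that for every $p\in P$ and real $R>0$, $\mathit{ball}_P(p,R)$ is covered by at most $\lambda$ balls $\mathit{ball}_P(q,R/2)$ with $q\in P$; throughout, $d$ denotes the doubling dimension of the whole space $P$. Algorithm $\mathrm{SepAnn}(S,n,d,\mu,c)$: repeat: choose $p$ uniformly at random from $S$; let $R_p=\min\{r>0:|\mathit{ball}_S(p,r)|\ge n/c\}$; until $|\mathit{ball}_S(p,\mu R_p)|\le n/2$; return $p$ and $R'=R_p$. Algorithm $\mathrm{SparseSepAnn}(S,n,d,t)$: set $c=2(4e)^d$; let $(p,R')$ be the output of $\mathrm{SepAnn}(S,n,d,e,c)$; let $R_i=(1+1/t)^iR'$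 ($0\le i\le t$) and $A_i=\mathit{annulus}_S(p,R_{i-1},R_i)$ ($1\le i\le t$); repeat: choose $i$ uniformly at random from $\{1,\dots,t\}$; until $|A_i|\le n/t$; return $p$ and $R=R_{i-1}$. Algorithm $\mathrm{ClosestPair}(S,n,d)$ (for $S\subseteq P$, $n=|S|\ge2$): if $n<2(16e)^d$, compute $\delta_0=\delta(S)$ by brute force. Otherwise: set $t=\lfloor \frac{1}{16e}(n/2)^{1/d}\rfloor$; let $(p,R)$ be the output of $\mathrm{SparseSepAnn}(S,n,d,t)$; let $S_1=\mathit{ball}_S(p,R)$, $S_2=\mathit{annulus}_S(p,R,(1+1/t)R)$, $S_3=S\setminus(S_1\cup S_2)$; compute $\delta'=\mathrm{ClosestPair}(S_1\cup S_2,|S_1\cup S_2|,d)$ and $\delta''=\mathrm{ClosestPair}(S_2\cup S_3,|S_2\cup S_3|,d)$; set $\delta_0=\min(\delta',\delta'')$. Return $\delta_0$. *)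

theory Defs
  imports Complex_Main "HOL-Library.Extended_Real"
begin

definition metric_on :: "'a set \<Rightarrow> ('a \<Rightarrow> 'a \<Rightarrow> real) \<Rightarrow> bool" where
  "metric_on P dst \<longleftrightarrow>
     (\<forall>x\<in>P. \<forall>y\<in>P. dst x y \<ge> 0 \<and> (dst x y = 0 \<longleftrightarrow> x = y) \<and> dst x y = dst y x) \<and>
     (\<forall>x\<in>P. \<forall>y\<in>P. \<forall>z\<in>P. dst x z \<le> dst x y + dst y z)"

definition mball :: "('a \<Rightarrow> 'a \<Rightarrow> real) \<Rightarrow> 'a set \<Rightarrow> 'a \<Rightarrow> real \<Rightarrow> 'a set" where
  "mball dst X p R = {x \<in> X. dst p x \<le> R}"

definition annulus :: "('a \<Rightarrow> 'a \<Rightarrow> real) \<Rightarrow> 'a set \<Rightarrow> 'a \<Rightarrow> real \<Rightarrow> real \<Rightarrow> 'a set" where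
  "annulus dst X p R R' = {x \<in> X. R < dst p x \<and> dst p x \<le> R'}"

definition cp_delta :: "('a \<Rightarrow> 'a \<Rightarrow> real) \<Rightarrow> 'a set \<Rightarrow> ereal" where
  "cp_delta dst X = (if card X \<le> 1 then \<infinity>
      else ereal (Min {dst x y | x y. x \<in> X \<and> y \<in> X \<and> x \<noteq> y}))"

definition doubling_const :: "'a set \<Rightarrow> ('a \<Rightarrow> 'a \<Rightarrow> real) \<Rightarrow> nat" where
  "doubling_const P dst = (LEAST lam::nat. \<forall>p\<in>P. \<forall>R>0. \<exists>C. C \<subseteq> P \<and> finite C \<and> card C \<le> lam \<and>
        mball dst P p R \<subseteq> (\<Union>q\<in>C. mball dst P q (R/2)))"

definition doubling_dim :: "'a set \<Rightarrow> ('a \<Rightarrow> 'a \<Rightarrow> real) \<Rightarrow> real" where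
  "doubling_dim P dst = log 2 (real (doubling_const P dst))"

text \<open>All possible outputs of SepAnn(S,n,d,mu,c) (the repeat loop stops at a
  uniformly random p satisfying the exit condition; any such p is a possible outcome).\<close>
definition sep_ann_R :: "('a \<Rightarrow> 'a \<Rightarrow> real) \<Rightarrow> 'a set \<Rightarrow> nat \<Rightarrow> real \<Rightarrow> 'a \<Rightarrow> real" where
  "sep_ann_R dst S n c p = (LEAST r::real. r > 0 \<and> real (card (mball dst S p r)) \<ge> real n / c)"

definition sep_ann_out :: "('a \<Rightarrow> 'a \<Rightarrow> real) \<Rightarrow> 'a set \<Rightarrow> nat \<Rightarrow> real \<Rightarrow> real \<Rightarrow> real \<Rightarrow> ('a \<times> real) set" where
  "sep_ann_out dst S n d mu c =
     {(p, R'). p \<in> S \<and> R' = sep_ann_R dst S n c p \<and>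
               real (card (mball dst S p (mu * R'))) \<le> real n / 2}"

definition sparse_sep_ann_out :: "('a \<Rightarrow> 'a \<Rightarrow> real) \<Rightarrow> 'a set \<Rightarrow> nat \<Rightarrow> real \<Rightarrow> nat \<Rightarrow> ('a \<times> real) set" where
  "sparse_sep_ann_out dst S n d t =
     (let c = 2 * (4 * exp 1) powr d in
      {(p, R). \<exists>R'. (p, R') \<in> sep_ann_out dst S n d (exp 1) c \<and>
         (\<exists>i\<in>{1..t}.
            real (card (annulus dst S p ((1 + 1 / real t) ^ (i - 1) * R') ((1 + 1 / real t) ^ i * R')))
              \<le> real n / real t
            \<and> R = (1 + 1 / real t) ^ (i - 1) * R')})"

text \<open>closest_pair_out dst d S delta0: delta0 is a possible output of ClosestPair(S,|S|,d).\<close>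
inductive closest_pair_out :: "('a \<Rightarrow> 'a \<Rightarrow> real) \<Rightarrow> real \<Rightarrow> 'a set \<Rightarrow> ereal \<Rightarrow> bool"
  for dst :: "'a \<Rightarrow> 'a \<Rightarrow> real" and d :: real where
  base: "real (card S) < 2 * (16 * exp 1) powr d \<Longrightarrow> closest_pair_out dst d S (cp_delta dst S)"
| step: "\<lbrakk> \<not> (real (card S) < 2 * (16 * exp 1) powr d);
           t = nat \<lfloor>(1 / (16 * exp 1)) * (real (card S) / 2) powr (1 / d)\<rfloor>;
           (p, R) \<in> sparse_sep_ann_out dst S (card S) d t;
           S1 = mball dst S p R;
           S2 = annulus dst S p R ((1 + 1 / real t) * R);
           S3 = S - (S1 \<union> S2);
           closest_pair_out dst d (S1 \<union> S2) d';
           closest_pair_out dst d (S2 \<union> S3) d'' \<rbrakk>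
         \<Longrightarrow> closest_pair_out dst d S (min d' d'')"

end

theory Submission
  imports Defs
begin

lemma cp_fin: "finite X \<Longrightarrow> finite {dst x y | x y. x \<in> X \<and> y \<in> X \<and> x \<noteq> y}"
proof -
  assume "finite X"
  have "{dst x y | x y. x \<in> X \<and> y \<in> X \<and> x \<noteq> y} \<subseteq> (\<lambda>(x,y). dst x y) ` (X \<times> X)" by auto
  thus ?thesis using \<open>finite X\<close> by (meson finite_SigmaI finite_imageI finite_subset)
qed

lemma cp_ne: "finite X \<Longrightarrow> \<not> card X \<le> 1 \<Longrightarrow> \<exists>x y. x \<in> X \<and> y \<in> X \<and> x \<noteq> y"
  by (metis One_nat_def card_le_Suc0_iff_eq not_less_eq_eq)

lemma cp_attained:
  assumes "finite X" "\<not> card X \<le> 1"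
  shows "\<exists>x y. x \<in> X \<and> y \<in> X \<and> x \<noteq> y \<and> cp_delta dst X = ereal (dst x y)"
proof -
  let ?D = "{dst x y | x y. x \<in> X \<and> y \<in> X \<and> x \<noteq> y}"
  have "?D \<noteq> {}" using cp_ne[OF assms] by blast
  hence "Min ?D \<in> ?D" using cp_fin[OF assms(1)] Min_in by blast
  thus ?thesis using assms(2) unfolding cp_delta_def by auto
qed

lemma cp_le_pair:
  assumes "finite X" "x \<in> X" "y \<in> X" "x \<noteq> y"
  shows "cp_delta dst X \<le> ereal (dst x y)"
proof -
  have "\<not> card X \<le> 1" using assms
    by (metis card_le_Suc0_iff_eq One_nat_def)
  moreover have "Min {dst x y | x y. x \<in> X \<and> y \<in> X \<and> x \<noteq> y} \<le> dst x y"
    using cp_fin[OF assms(1)] assms by (intro Min_le) auto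
  ultimately show ?thesis unfolding cp_delta_def by auto
qed

lemma cp_mono:
  assumes "finite Y" "X \<subseteq> Y"
  shows "cp_delta dst Y \<le> cp_delta dst X"
proof (cases "card X \<le> 1")
  case True thus ?thesis unfolding cp_delta_def by auto
next
  case False
  have fX: "finite X" using assms finite_subset by blast
  then obtain x y where "x \<in> X" "y \<in> X" "x \<noteq> y" "cp_delta dst X = ereal (dst x y)"
    using cp_attained[OF fX False] by blast
  thus ?thesis using cp_le_pair[OF assms(1)] assms(2) by auto
qed

lemma dbl:
  assumes "finite P" "metric_on P dst"
  shows "\<forall>p\<in>P. \<forall>R>0. \<exists>C. C \<subseteq> P \<and> finite C \<and> card C \<le> doubling_const P dst \<and>
        mball dst P p R \<subseteq> (\<Union>q\<in>C. mball dst P q (R/2))"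
proof -
  let ?Q = "\<lambda>lam. \<forall>p\<in>P. \<forall>R>0. \<exists>C. C \<subseteq> P \<and> finite C \<and> card C \<le> lam \<and>
        mball dst P p R \<subseteq> (\<Union>q\<in>C. mball dst P q (R/2))"
  have "?Q (card P)"
  proof (intro ballI allI impI)
    fix p and R :: real assume "p \<in> P" "R > 0"
    show "\<exists>C. C \<subseteq> P \<and> finite C \<and> card C \<le> card P \<and>
        mball dst P p R \<subseteq> (\<Union>q\<in>C. mball dst P q (R/2))"
      using assms \<open>R > 0\<close> by (intro exI[of _ P]) (force simp: mball_def metric_on_def)
  qed
  from LeastI[of ?Q, OF this] show ?thesis unfolding doubling_const_def .
qed

lemma cover:
  assumes "finite P" "metric_on P dst"
  shows "q \<in> P \<Longrightarrow> r > 0 \<Longrightarrow> \<exists>C. C \<subseteq> P \<and> finite C \<and> card C \<le> doubling_const P dst ^ k \<and>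
        mball dst P q r \<subseteq> (\<Union>c\<in>C. mball dst P c (r/2^k))"
proof (induction k arbitrary: q r)
  case 0
  then show ?case using assms by (intro exI[of _ "{q}"]) auto
next
  case (Suc k)
  have "\<exists>C. C \<subseteq> P \<and> finite C \<and> card C \<le> doubling_const P dst \<and>
     mball dst P q r \<subseteq> (\<Union>c\<in>C. mball dst P c (r/2))"
    using dbl[OF assms] Suc.prems by (elim ballE allE) auto
  then obtain C where C0: "C \<subseteq> P \<and> finite C \<and> card C \<le> doubling_const P dst \<and>
     mball dst P q r \<subseteq> (\<Union>c\<in>C. mball dst P c (r/2))" by (rule exE)
  have C: "C \<subseteq> P" "finite C" "card C \<le> doubling_const P dst"
     "mball dst P q r \<subseteq> (\<Union>c\<in>C. mball dst P c (r/2))" using C0 by simp_all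
  have "\<forall>c\<in>C. \<exists>D. D \<subseteq> P \<and> finite D \<and> card D \<le> doubling_const P dst ^ k \<and>
        mball dst P c (r/2) \<subseteq> (\<Union>e\<in>D. mball dst P e ((r/2)/2^k))"
  proof
    fix c assume "c \<in> C"
    hence "c \<in> P" using C(1) by blast
    show "\<exists>D. D \<subseteq> P \<and> finite D \<and> card D \<le> doubling_const P dst ^ k \<and>
        mball dst P c (r/2) \<subseteq> (\<Union>e\<in>D. mball dst P e ((r/2)/2^k))"
      by (rule Suc.IH[OF \<open>c \<in> P\<close>]) (use Suc.prems(2) in simp)
  qed
  then obtain F where F: "\<forall>c\<in>C. F c \<subseteq> P \<and> finite (F c) \<and> card (F c) \<le> doubling_const P dst ^ k \<and>
        mball dst P c (r/2) \<subseteq> (\<Union>e\<in>F c. mball dst P e ((r/2)/2^k))"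
    by metis
  let ?D = "\<Union>c\<in>C. F c"
  have "card ?D \<le> (\<Sum>c\<in>C. card (F c))" by (rule card_UN_le[OF C(2)])
  also have "\<dots> \<le> (\<Sum>c\<in>C. doubling_const P dst ^ k)" using F by (intro sum_mono) auto
  also have "\<dots> = card C * doubling_const P dst ^ k" by simp
  also have "\<dots> \<le> doubling_const P dst * doubling_const P dst ^ k" using C(3) by simp
  finally have "card ?D \<le> doubling_const P dst ^ Suc k" by simp
  moreover have "mball dst P q r \<subseteq> (\<Union>e\<in>?D. mball dst P e (r/2^Suc k))"
  proof
    fix x assume "x \<in> mball dst P q r"
    then obtain c where "c \<in> C" "x \<in> mball dst P c (r/2)" using C(4) by blast
    then obtain e where "e \<in> F c" "x \<in> mball dst P e ((r/2)/2^k)" using F by blast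
    thus "x \<in> (\<Union>e\<in>?D. mball dst P e (r/2^Suc k))" using \<open>c \<in> C\<close> by (auto simp: mult.commute)
  qed
  ultimately show ?case using F C by (intro exI[of _ ?D]) auto
qed

lemma packing:
  assumes "finite P" "metric_on P dst" "X \<subseteq> P" "q \<in> P" "r > 0"
    and sep: "\<forall>x\<in>X. \<forall>y\<in>X. x \<noteq> y \<longrightarrow> \<delta> \<le> dst x y"
    and small: "2 * r / 2^k < \<delta>"
  shows "card (mball dst X q r) \<le> doubling_const P dst ^ k"
proof -
  obtain C where C0: "C \<subseteq> P \<and> finite C \<and> card C \<le> doubling_const P dst ^ k \<and>
     mball dst P q r \<subseteq> (\<Union>c\<in>C. mball dst P c (r/2^k))"
    using cover[OF assms(1,2,4,5)] by (rule exE)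
  have C: "C \<subseteq> P" "finite C" "card C \<le> doubling_const P dst ^ k"
     "mball dst P q r \<subseteq> (\<Union>c\<in>C. mball dst P c (r/2^k))" using C0 by simp_all
  define f where "f x = (SOME c. c \<in> C \<and> x \<in> mball dst P c (r/2^k))" for x
  have fx: "f x \<in> C \<and> x \<in> mball dst P (f x) (r/2^k)" if "x \<in> mball dst X q r" for x
  proof -
    have "x \<in> mball dst P q r" using that assms(3) by (auto simp: mball_def)
    hence "\<exists>c. c \<in> C \<and> x \<in> mball dst P c (r/2^k)" using C(4) by blast
    thus ?thesis unfolding f_def by (rule someI_ex)
  qed
  have "inj_on f (mball dst X q r)"
  proof (rule inj_onI, rule ccontr)
    fix x y assume xy: "x \<in> mball dst X q r" "y \<in> mball dst X q r" "f x = f y" "x \<noteq> y"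
    have c: "f x \<in> P" "dst (f x) x \<le> r/2^k" "dst (f x) y \<le> r/2^k" "x \<in> P" "y \<in> P"
      using fx[OF xy(1)] fx[OF xy(2)] xy(3) C(1) by (auto simp: mball_def)
    have "dst x y \<le> dst x (f x) + dst (f x) y" using assms(2) c unfolding metric_on_def by blast
    also have "dst x (f x) = dst (f x) x" using assms(2) c unfolding metric_on_def by blast
    finally have "dst x y \<le> 2 * r / 2^k" using c by simp
    moreover have "\<delta> \<le> dst x y" using sep xy by (auto simp: mball_def)
    ultimately show False using small by simp
  qed
  moreover have "f ` mball dst X q r \<subseteq> C" using fx by blast
  ultimately have "card (mball dst X q r) \<le> card C" using C(2) by (metis card_inj_on_le)
  thus ?thesis using C(3) by simp
qed

lemma arith_bound:
  fixes lam :: nat and K :: nat and n :: nat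
  assumes lam: "lam \<ge> 2" and d: "d = log 2 (real lam)" and \<delta>: "\<delta> > 0" and R: "R' > 0"
    and t: "real t \<le> (1 / (16 * exp 1)) * (real n / 2) powr (1 / d)"
    and c: "c = 2 * (4 * exp 1) powr d"
    and K: "real n / c \<le> real K" and nc: "real n / c > 1"
    and pack: "\<And>k::nat. 2 * R' / 2^k < \<delta> \<Longrightarrow> K \<le> lam ^ k"
  shows "\<delta> * real t \<le> R'"
proof (rule ccontr)
  assume "\<not> \<delta> * real t \<le> R'"
  hence lt: "R' < \<delta> * real t" by simp
  have dpos: "d > 0" using lam d by simp
  have ex: "\<exists>k::nat. 2 * R' / \<delta> < 2^k" using real_arch_pow[of 2 "2 * R' / \<delta>"] by auto
  define k where "k = (LEAST k::nat. 2 * R' / \<delta> < 2^k)"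
  have k1: "2 * R' / \<delta> < 2^k" unfolding k_def by (rule LeastI_ex[OF ex])
  have "2 * R' / 2^k < \<delta>" using k1 \<delta> by (simp add: field_simps)
  hence Kle: "K \<le> lam ^ k" by (rule pack)
  show False
  proof (cases "k = 0")
    case True
    then show ?thesis using Kle K nc by simp
  next
    case False
    have "\<not> 2 * R' / \<delta> < 2^(k-1)" unfolding k_def
      by (rule not_less_Least) (use False k_def in auto)
    hence "2^(k-1) \<le> 2 * R' / \<delta>" by simp
    moreover have "(2::real)^k = 2 * 2^(k-1)" using False by (cases k) auto
    ultimately have "(2::real)^k \<le> 4 * R' / \<delta>" by simp
    also have "\<dots> < 4 * real t" using lt \<delta> by (simp add: field_simps)
    finally have k4: "(2::real)^k < 4 * real t" .
    have lamd: "2 powr d = real lam" using lam d by simp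
    have "real (lam ^ k) = (2 powr d) ^ k" using lamd by simp
    also have "\<dots> = 2 powr (real k * d)" by (subst powr_power) auto
    also have "\<dots> = (2 powr real k) powr d" by (simp add: powr_powr)
    also have "\<dots> = (2 ^ k) powr d" by (subst powr_realpow) auto
    also have "\<dots> < (4 * real t) powr d" using k4 dpos by (intro powr_less_mono2) auto
    also have "\<dots> \<le> (((real n / 2) powr (1 / d)) / (4 * exp 1)) powr d"
    proof (rule powr_mono2)
      obtain X where X: "X = (real n / 2) powr (1 / d)" by blast
      have e: "4 * (1 / (16 * exp 1) * X) = X / (4 * exp 1)" by (simp add: field_simps)
      have "4 * real t \<le> 4 * (1 / (16 * exp 1) * X)" using t X by simp
      thus "4 * real t \<le> (real n / 2) powr (1 / d) / (4 * exp 1)" using e X by simp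
    qed (use dpos in auto)
    also have "\<dots> = ((real n / 2) powr (1 / d)) powr d / (4 * exp 1) powr d"
      by (rule powr_divide)
    also have "\<dots> = (real n / 2) / (4 * exp 1) powr d"
    proof -
      have "((real n / 2) powr (1 / d)) powr d = (real n / 2) powr (1 / d * d)" by (rule powr_powr)
      also have "1 / d * d = 1" using dpos by simp
      also have "(real n / 2) powr 1 = real n / 2" by (rule powr_one) simp
      finally have eq: "((real n / 2) powr (1 / d)) powr d = real n / 2" .
      show ?thesis by (simp only: eq)
    qed
    also have "\<dots> = real n / c" using c by simp
    finally have "real (lam ^ k) < real n / c" .
    with Kle K show False by (metis of_nat_le_iff order.strict_trans1 not_le)
  qed
qed

lemma sep_P:
  assumes "finite P" "metric_on P dst" "\<not> card P \<le> 1"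
  shows "\<exists>\<delta>>0. cp_delta dst P = ereal \<delta> \<and> (\<forall>a\<in>P. \<forall>b\<in>P. a \<noteq> b \<longrightarrow> \<delta> \<le> dst a b)"
proof -
  obtain x y where xy: "x \<in> P" "y \<in> P" "x \<noteq> y" "cp_delta dst P = ereal (dst x y)"
    using cp_attained[OF assms(1,3)] by blast
  have m: "\<forall>x\<in>P. \<forall>y\<in>P. 0 \<le> dst x y \<and> (dst x y = 0 \<longleftrightarrow> x = y) \<and> dst x y = dst y x"
    using assms(2) unfolding metric_on_def by (rule conjunct1)
  have "dst x y > 0" using m[rule_format, OF xy(1) xy(2)] xy(3) by linarith
  moreover have "\<forall>a\<in>P. \<forall>b\<in>P. a \<noteq> b \<longrightarrow> dst x y \<le> dst a b"
  proof (intro ballI impI)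
    fix a b assume "a \<in> P" "b \<in> P" "a \<noteq> b"
    hence "cp_delta dst P \<le> ereal (dst a b)" using cp_le_pair[OF assms(1)] by blast
    thus "dst x y \<le> dst a b" using xy(4) by simp
  qed
  ultimately show ?thesis using xy by blast
qed

lemma lam_ge2:
  assumes "finite P" "metric_on P dst" "x \<in> P" "y \<in> P" "x \<noteq> y"
    and "\<delta> > 0" and sep: "\<forall>a\<in>P. \<forall>b\<in>P. a \<noteq> b \<longrightarrow> \<delta> \<le> dst a b"
  shows "doubling_const P dst \<ge> 2"
proof (rule ccontr)
  assume "\<not> doubling_const P dst \<ge> 2"
  hence l1: "doubling_const P dst \<le> 1" by simp
  define r where "r = dst x y"
  have r: "r > 0" using sep[rule_format, OF assms(3,4,5)] \<open>\<delta> > 0\<close> unfolding r_def by linarith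
  obtain k :: nat where k: "2 * r / \<delta> < 2^k" using real_arch_pow[of 2 "2 * r / \<delta>"] by auto
  have "2 * r / 2^k < \<delta>" using k \<open>\<delta> > 0\<close> by (simp add: field_simps)
  hence "card (mball dst P x r) \<le> doubling_const P dst ^ k"
    using packing[OF assms(1,2) order_refl assms(3) r sep] by blast
  also have "\<dots> \<le> 1" using power_mono[OF l1, of k] by simp
  finally have c1: "card (mball dst P x r) \<le> 1" .
  have "dst x x = 0" using assms(2,3) unfolding metric_on_def by blast
  hence "{x, y} \<subseteq> mball dst P x r" using assms(3,4) r unfolding mball_def r_def by auto
  hence "card {x, y} \<le> card (mball dst P x r)"
    by (rule card_mono[rotated]) (simp add: mball_def assms(1))
  thus False using c1 assms(5) by simp
qed

lemma least_ex:
  assumes "finite P" "metric_on P dst" "S \<subseteq> P" "p \<in> S" "q > 1" "q \<le> real (card S)"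
  shows "\<exists>r0. r0 > 0 \<and> q \<le> real (card (mball dst S p r0)) \<and>
           (\<forall>r. r > 0 \<and> q \<le> real (card (mball dst S p r)) \<longrightarrow> r0 \<le> r)"
proof -
  have fS: "finite S" using assms finite_subset by blast
  have met: "dst a b \<ge> 0 \<and> (dst a b = 0 \<longleftrightarrow> a = b)" if "a \<in> S" "b \<in> S" for a b
  proof -
    have "a \<in> P" "b \<in> P" using that assms(3) by auto
    thus ?thesis using assms(2) unfolding metric_on_def by simp
  qed
  define A where "A = {r. r > 0 \<and> q \<le> real (card (mball dst S p r))}"
  define D where "D = A \<inter> dst p ` S"
  have key: "\<exists>r1\<in>D. r1 \<le> r" if "r \<in> A" for r
  proof -
    let ?B = "mball dst S p r"
    have fB: "finite ?B" using fS by (simp add: mball_def)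
    have "q \<le> real (card ?B)" using that unfolding A_def by simp
    hence "real (card ?B) > 1" using assms(5) by linarith
    hence "\<not> card ?B \<le> 1" by simp
    then obtain a b where ab: "a \<in> ?B" "b \<in> ?B" "a \<noteq> b" using cp_ne[OF fB] by blast
    obtain x where x: "x \<in> ?B" "x \<noteq> p" using ab by metis
    define r1 where "r1 = Max (dst p ` ?B)"
    have r1le: "r1 \<le> r" unfolding r1_def using fB x by (subst Max_le_iff) (auto simp: mball_def)
    have r1in: "r1 \<in> dst p ` ?B" unfolding r1_def using fB x by (intro Max_in) auto
    have ge: "dst p z \<le> r1" if "z \<in> ?B" for z unfolding r1_def using fB that by (intro Max_ge) auto
    have eqB: "mball dst S p r1 = ?B" using r1le ge by (auto simp: mball_def)
    have "dst p x > 0" using met[of p x] x assms(4) by (auto simp: mball_def)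
    hence "r1 > 0" using ge[OF x(1)] by simp
    hence "r1 \<in> A" using that eqB unfolding A_def by simp
    moreover have "r1 \<in> dst p ` S" using r1in by (auto simp: mball_def)
    ultimately show ?thesis using r1le unfolding D_def by blast
  qed
  have fD: "finite D" unfolding D_def using fS by (intro finite_Int) simp
  define M where "M = Max (dst p ` S)"
  have "\<forall>x\<in>S. dst p x \<le> M" unfolding M_def using fS by simp
  hence "mball dst S p M = S" unfolding mball_def by blast
  moreover have "M > 0"
  proof -
    have "\<not> card S \<le> 1" using assms(5,6) by linarith
    then obtain a b where "a \<in> S" "b \<in> S" "a \<noteq> b" using cp_ne[OF fS] by blast
    then obtain x where x: "x \<in> S" "x \<noteq> p" by metis
    have "dst p x > 0" using met[of p x] x assms(4) by auto
    moreover have "dst p x \<le> M" unfolding M_def using fS x by simp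
    ultimately show ?thesis by simp
  qed
  ultimately have "M \<in> A" unfolding A_def using assms(6) by simp
  then obtain r1 where "r1 \<in> D" using key by blast
  hence Dne: "D \<noteq> {}" by blast
  define r0 where "r0 = Min D"
  have "r0 \<in> D" unfolding r0_def using fD Dne by simp
  moreover have "\<forall>r\<in>A. r0 \<le> r"
  proof
    fix r assume "r \<in> A"
    then obtain r1 where "r1 \<in> D" "r1 \<le> r" using key by blast
    thus "r0 \<le> r" unfolding r0_def using fD by (meson Min_le order_trans)
  qed
  ultimately have r0A: "r0 \<in> A" and r0min: "\<forall>r\<in>A. r0 \<le> r" unfolding D_def by blast+
  have "r0 > 0 \<and> q \<le> real (card (mball dst S p r0))" using r0A unfolding A_def by simp
  moreover have "\<forall>r. r > 0 \<and> q \<le> real (card (mball dst S p r)) \<longrightarrow> r0 \<le> r"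
    using r0min unfolding A_def by simp
  ultimately show ?thesis by blast
qed

lemma R_bound:
  assumes fP: "finite P" and met: "metric_on P dst" and SP: "S \<subseteq> P" and dd: "d = doubling_dim P dst"
    and lam: "doubling_const P dst \<ge> 2" and \<delta>: "\<delta> > 0"
    and sep: "\<forall>a\<in>P. \<forall>b\<in>P. a \<noteq> b \<longrightarrow> \<delta> \<le> dst a b"
    and big: "\<not> real (card S) < 2 * (16 * exp 1) powr d"
    and t: "t = nat \<lfloor>(1 / (16 * exp 1)) * (real (card S) / 2) powr (1 / d)\<rfloor>"
    and pR: "(p, R) \<in> sparse_sep_ann_out dst S (card S) d t"
  shows "p \<in> S \<and> 1 \<le> t \<and> \<delta> * real t \<le> R"
proof -
  define lam where "lam = doubling_const P dst"
  define n where "n = card S"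
  define c where "c = 2 * (4 * exp 1) powr d"
  have d: "d = log 2 (real lam)" using dd unfolding doubling_dim_def lam_def .
  have lam2: "lam \<ge> 2" using lam unfolding lam_def .
  have "log 2 2 \<le> log 2 (real lam)" using lam2 by (subst log_le_cancel_iff) auto
  hence d1: "d \<ge> 1" using d by simp
  from pR obtain R' i where R': "(p, R') \<in> sep_ann_out dst S n d (exp 1) c" and i: "i \<in> {1..t}"
    and R: "R = (1 + 1 / real t) ^ (i - 1) * R'"
    unfolding sparse_sep_ann_out_def Let_def c_def n_def by blast
  have t1: "1 \<le> t" using i by simp
  from R' have p: "p \<in> S" and R'def: "R' = sep_ann_R dst S n c p" unfolding sep_ann_out_def by auto
  have e1: "(4 * exp 1) powr d \<ge> 1" by (rule ge_one_powr_ge_zero) (use d1 exp_ge_add_one_self[of 1] in auto)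
  have cpos: "c \<ge> 2" unfolding c_def using e1 by simp
  have "(16 * exp 1) powr d = 4 powr d * (4 * exp 1) powr d"
    by (subst powr_mult[symmetric]) auto
  moreover have "4 powr d \<ge> 4 powr (1::real)" using d1 by (intro powr_mono) auto
  ultimately have "(16 * exp 1) powr d \<ge> 4 * (4 * exp 1) powr d"
    using e1 by (simp add: mult_right_mono)
  hence "real n \<ge> 4 * c" using big unfolding n_def c_def by simp
  hence nc: "real n / c > 1" using cpos by (simp add: field_simps)
  have "real n * 1 \<le> real n * c" using cpos by (intro mult_left_mono) auto
  hence "real n / c \<le> real n" using cpos by (simp add: divide_le_eq)
  hence ncle: "real n / c \<le> real (card S)" unfolding n_def .
  have pP: "p \<in> P" using p SP by blast
  obtain r0 where r0: "r0 > 0" "real n / c \<le> real (card (mball dst S p r0))"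
    "\<forall>r. r > 0 \<and> real n / c \<le> real (card (mball dst S p r)) \<longrightarrow> r0 \<le> r"
    using least_ex[OF fP met SP p nc ncle] by blast
  have "sep_ann_R dst S n c p = r0" unfolding sep_ann_R_def
    by (rule Least_equality) (use r0 in auto)
  hence R'r0: "R' = r0" using R'def by simp
  have sepS: "\<forall>x\<in>S. \<forall>y\<in>S. x \<noteq> y \<longrightarrow> \<delta> \<le> dst x y" using sep SP by blast
  have tb: "real t \<le> (1 / (16 * exp 1)) * (real n / 2) powr (1 / d)"
  proof -
    obtain x where x: "x = (1 / (16 * exp 1)) * (real n / 2) powr (1 / d)" by blast
    have "x \<ge> 0" using x by simp
    hence "real (nat \<lfloor>x\<rfloor>) \<le> x" by linarith
    thus ?thesis using t x unfolding n_def by simp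
  qed
  have main: "\<delta> * real t \<le> R'"
    using arith_bound[OF lam2 d \<delta> r0(1)[folded R'r0] tb c_def r0(2)[folded R'r0] nc]
      packing[OF fP met SP pP r0(1)[folded R'r0] sepS] unfolding lam_def by blast
  have "1 \<le> (1 + 1 / real t) ^ (i - 1)" by (rule one_le_power) simp
  hence "R' \<le> R" unfolding R using r0(1) R'r0 by (simp add: mult_le_cancel_right1)
  thus ?thesis using main p t1 by simp
qed

lemma main:
  assumes "closest_pair_out dst d S \<delta>0" "finite P" "metric_on P dst" "d = doubling_dim P dst"
  shows "S \<subseteq> P \<Longrightarrow> cp_delta dst P \<le> \<delta>0 \<and> (cp_delta dst S = cp_delta dst P \<longrightarrow> \<delta>0 = cp_delta dst P)"
  using assms(1)
proof (induction rule: closest_pair_out.induct)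
  case (base S)
  then show ?case using cp_mono[OF assms(2)] by simp
next
  case (step S t p R S1 S2 S3 d' d'')
  have sub: "S1 \<union> S2 \<subseteq> S" "S2 \<union> S3 \<subseteq> S" using step.hyps(4,5,6) by (auto simp: mball_def annulus_def)
  have IH1: "cp_delta dst P \<le> d' \<and> (cp_delta dst (S1 \<union> S2) = cp_delta dst P \<longrightarrow> d' = cp_delta dst P)"
    using step.IH(1) sub step.prems by blast
  have IH2: "cp_delta dst P \<le> d'' \<and> (cp_delta dst (S2 \<union> S3) = cp_delta dst P \<longrightarrow> d'' = cp_delta dst P)"
    using step.IH(2) sub step.prems by blast
  have ge: "cp_delta dst P \<le> min d' d''" using IH1 IH2 by simp
  moreover have "cp_delta dst S = cp_delta dst P \<longrightarrow> min d' d'' = cp_delta dst P"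
  proof
    assume eq: "cp_delta dst S = cp_delta dst P"
    show "min d' d'' = cp_delta dst P"
    proof (rule antisym[OF _ ge], cases "card P \<le> 1")
      case True
      then show "min d' d'' \<le> cp_delta dst P" unfolding cp_delta_def by simp
    next
      case False
      obtain \<delta> where \<delta>: "\<delta> > 0" "cp_delta dst P = ereal \<delta>" "\<forall>a\<in>P. \<forall>b\<in>P. a \<noteq> b \<longrightarrow> \<delta> \<le> dst a b"
        using sep_P[OF assms(2,3) False] by blast
      have fS: "finite S" using step.prems assms(2) finite_subset by blast
      have "\<not> card S \<le> 1" using eq \<delta>(2) unfolding cp_delta_def by (auto split: if_splits)
      then obtain x y where xy: "x \<in> S" "y \<in> S" "x \<noteq> y" "cp_delta dst S = ereal (dst x y)"
        using cp_attained[OF fS] by blast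
      have dxy: "dst x y = \<delta>" using xy(4) eq \<delta>(2) by simp
      have xyP: "x \<in> P" "y \<in> P" using xy step.prems by auto
      have lam: "doubling_const P dst \<ge> 2" by (rule lam_ge2[OF assms(2,3) xyP xy(3) \<delta>(1,3)])
      have rb: "p \<in> S \<and> 1 \<le> t \<and> \<delta> * real t \<le> R"
        by (rule R_bound[OF assms(2,3) step.prems assms(4) lam \<delta>(1,3) step.hyps(1,2,3)])
      have pP: "p \<in> P" using rb step.prems by blast
      have tpos: "real t > 0" using rb by simp
      have Rt: "R / real t \<ge> \<delta>" using rb tpos by (simp add: field_simps)
      have split: "(1 + 1 / real t) * R = R + R / real t" by (simp add: field_simps)
      have mx: "\<forall>x\<in>P. \<forall>y\<in>P. 0 \<le> dst x y \<and> (dst x y = 0 \<longleftrightarrow> x = y) \<and> dst x y = dst y x"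
        using assms(3) unfolding metric_on_def by (rule conjunct1)
      have tri: "\<forall>x\<in>P. \<forall>y\<in>P. \<forall>z\<in>P. dst x z \<le> dst x y + dst y z"
        using assms(3) unfolding metric_on_def by (rule conjunct2)
      have bad: False if "a \<in> S1" "b \<in> S3" "dst a b = \<delta>" "a \<in> P" "b \<in> P" for a b
      proof -
        have "dst p a \<le> R" using that(1) step.hyps(4) by (simp add: mball_def)
        moreover have "\<not> dst p b \<le> R" "\<not> (R < dst p b \<and> dst p b \<le> (1 + 1 / real t) * R)"
          using that(2) step.hyps(4,5,6) by (auto simp: mball_def annulus_def)
        hence "dst p b > (1 + 1 / real t) * R" by linarith
        moreover have "dst p b \<le> dst p a + dst a b" using tri pP that(4,5) by blast
        ultimately show False using that(3) Rt split by linarith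
      qed
      have dyx: "dst y x = \<delta>" using mx xyP dxy by metis
      have cover: "z \<in> S1 \<or> z \<in> S2 \<or> z \<in> S3" if "z \<in> S" for z using that step.hyps(6) by blast
      have case12: "cp_delta dst (S1 \<union> S2) = cp_delta dst P" if "x \<in> S1 \<union> S2" "y \<in> S1 \<union> S2"
      proof (rule antisym)
        have fin: "finite (S1 \<union> S2)" using fS sub finite_subset by blast
        have "cp_delta dst (S1 \<union> S2) \<le> ereal (dst x y)" using cp_le_pair[OF fin that xy(3)] .
        thus "cp_delta dst (S1 \<union> S2) \<le> cp_delta dst P" using dxy \<delta>(2) by simp
        show "cp_delta dst P \<le> cp_delta dst (S1 \<union> S2)"
          using cp_mono[OF assms(2)] sub step.prems by blast
      qed
      have case23: "cp_delta dst (S2 \<union> S3) = cp_delta dst P" if "x \<in> S2 \<union> S3" "y \<in> S2 \<union> S3"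
      proof (rule antisym)
        have fin: "finite (S2 \<union> S3)" using fS sub finite_subset by blast
        have "cp_delta dst (S2 \<union> S3) \<le> ereal (dst x y)" using cp_le_pair[OF fin that xy(3)] .
        thus "cp_delta dst (S2 \<union> S3) \<le> cp_delta dst P" using dxy \<delta>(2) by simp
        show "cp_delta dst P \<le> cp_delta dst (S2 \<union> S3)"
          using cp_mono[OF assms(2)] sub step.prems by blast
      qed
      have "(x \<in> S1 \<union> S2 \<and> y \<in> S1 \<union> S2) \<or> (x \<in> S2 \<union> S3 \<and> y \<in> S2 \<union> S3)"
        using cover[OF xy(1)] cover[OF xy(2)] bad[of x y] bad[of y x] dxy dyx xyP by blast
      then show "min d' d'' \<le> cp_delta dst P"
      proof
        assume "x \<in> S1 \<union> S2 \<and> y \<in> S1 \<union> S2"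
        hence "d' = cp_delta dst P" using case12 IH1 by blast
        thus ?thesis by (simp add: min.coboundedI1)
      next
        assume "x \<in> S2 \<union> S3 \<and> y \<in> S2 \<union> S3"
        hence "d'' = cp_delta dst P" using case23 IH2 by blast
        thus ?thesis by (simp add: min.coboundedI2)
      qed
    qed
  qed
  ultimately show ?case by blast
qed

theorem lemma5:
  fixes P :: "'a set" and dst :: "'a \<Rightarrow> 'a \<Rightarrow> real" and S :: "'a set"
    and d :: real and \<delta>0 :: ereal
  assumes "finite P"
    and "metric_on P dst"
    and "d = doubling_dim P dst"
    and "S \<subseteq> P"
    and "card S \<ge> 2"
    and "closest_pair_out dst d S \<delta>0"
  shows "\<delta>0 \<ge> cp_delta dst P \<and> (cp_delta dst S = cp_delta dst P \<longrightarrow> \<delta>0 = cp_delta dst P)"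
  using main[OF assms(6,1,2,3) assms(4)] by blast

end
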